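(* Let $n,d\ge 0$ be integers and let $G\subseteq\mathbb{N}$ be infinite (so $G\approx\omega$). Then there exists $H\subseteq\omega^d$ with $H\approx\omega^d$ such that every $e\in\binom{H}{n}$ satisfies some coloring rule on $\binom{\omega^d}{n}$, and every coefficient of every element of $e$ lies in $G$.
   Context: Ordinals are identified with the sets of smaller ordinals; $\approx$ is order-equivalence; $\binom{S}{n}$ is the set of $n$-element subsets of $S$. Every $\beta<\omega^d\cdot k$ ($d,k\ge0$) is uniquely written $\beta=\omega^d\cdot b+\omega^{d-1}a_{d-1}+\cdots+\omega a_1+a_0$ with $0\le b<k$, $a_j\in\mathbb{N}$; the numbers $a_0,\dots,a_{d-1}$ are called the coefficients of $\beta$; here $\omega^d=\omega^d\cdot1$. A coloring rule (CR) on $\binom{\omega^d\cdot k}{n}$ is a pair $(\mathcal{Y},\preceq)$ with $\mathcal{Y}:\{1,\dots,n\}\to\{0,\dots,k-1\}$ and $\preceq$ a total preorder on $I=\{(i,j):1\le i\le n,0\le j<d\}$ (write $\equiv$ for the induced equivalence and $\prec$ for the strict part) such that: (1) if $d\ge1$, $(i,0)\prec(i',0)$ for $i<i'$; if $d=0$, $\mathcal{Y}(i)<\mathcal{Y}(i')$ for $i<i'$; (2) $(i,j)\equiv(i',j)$ for some $j$ implies $\mathcal{Y}(i)=\mathcal{Y}(i')$; (3) $(i,j)\prec(i,j')$ for $j>j'$; (4) $(i,j)\equiv(i',j')$ implies $j=j'$; (5) for $j>0$, $(i,j)\not\equiv(i',j)$ implies $(i,j-1)\not\equiv(i',j-1)$.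 An edge $e\in\binom{\omega^d\cdot k}{n}$ satisfies the CR $(\mathcal{Y},\preceq)$ if its elements can be enumerated as $p_i=\omega^d b_i+\sum_{j<d}\omega^j a_{i,j}$ ($1\le i\le n$) so that $b_i=\mathcal{Y}(i)$ for all $i$ and $(i,j)\preceq(i',j')\iff a_{i,j}\le a_{i',j'}$ for all $(i,j),(i',j')\in I$. *)

theory Defs
  imports Main
begin

text \<open>Concrete representation of the ordinal \<omega>^d\<cdot>k: an ordinal
  \<beta> = \<omega>^d\<cdot>b + \<omega>^(d-1) a_(d-1) + ... + a_0 is represented by the pair
  (b, as) where as is the list of coefficients with as ! j = a_j.\<close>

definition ord_set :: "nat \<Rightarrow> nat \<Rightarrow> (nat \<times> nat list) set" where
  "ord_set d k = {(b, as). b < k \<and> length as = d}"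

definition ord_less :: "nat \<times> nat list \<Rightarrow> nat \<times> nat list \<Rightarrow> bool" where
  "ord_less x y \<longleftrightarrow> fst x < fst y \<or>
     (fst x = fst y \<and> (\<exists>j < length (snd x). snd x ! j < snd y ! j \<and>
        (\<forall>j'. j < j' \<and> j' < length (snd x) \<longrightarrow> snd x ! j' = snd y ! j')))"

definition order_equiv :: "(nat \<times> nat list) set \<Rightarrow> (nat \<times> nat list) set \<Rightarrow> bool" where
  "order_equiv A B \<longleftrightarrow> (\<exists>f. bij_betw f A B \<and>
     (\<forall>x\<in>A. \<forall>y\<in>A. ord_less x y \<longleftrightarrow> ord_less (f x) (f y)))"

definition index_set :: "nat \<Rightarrow> nat \<Rightarrow> (nat \<times> nat) set" where
  "index_set n d = {1..n} \<times> {0..<d}"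

definition total_preorder_on :: "'a set \<Rightarrow> ('a \<times> 'a) set \<Rightarrow> bool" where
  "total_preorder_on A R \<longleftrightarrow> R \<subseteq> A \<times> A \<and> (\<forall>x\<in>A. (x, x) \<in> R) \<and> trans R \<and>
     (\<forall>x\<in>A. \<forall>y\<in>A. (x, y) \<in> R \<or> (y, x) \<in> R)"

definition pre_strict :: "('a \<times> 'a) set \<Rightarrow> 'a \<Rightarrow> 'a \<Rightarrow> bool" where
  "pre_strict R x y \<longleftrightarrow> (x, y) \<in> R \<and> (y, x) \<notin> R"

definition pre_equiv :: "('a \<times> 'a) set \<Rightarrow> 'a \<Rightarrow> 'a \<Rightarrow> bool" where
  "pre_equiv R x y \<longleftrightarrow> (x, y) \<in> R \<and> (y, x) \<in> R"

definition coloring_rule :: "nat \<Rightarrow> nat \<Rightarrow> nat \<Rightarrow> (nat \<Rightarrow> nat) \<Rightarrow> ((nat \<times> nat) \<times> (nat \<times> nat)) set \<Rightarrow> bool" where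
  "coloring_rule d k n Y R \<longleftrightarrow>
     (\<forall>i\<in>{1..n}. Y i < k) \<and>
     total_preorder_on (index_set n d) R \<and>
     (d \<ge> 1 \<longrightarrow> (\<forall>i\<in>{1..n}. \<forall>i'\<in>{1..n}. i < i' \<longrightarrow> pre_strict R (i, 0) (i', 0))) \<and>
     (d = 0 \<longrightarrow> (\<forall>i\<in>{1..n}. \<forall>i'\<in>{1..n}. i < i' \<longrightarrow> Y i < Y i')) \<and>
     (\<forall>i\<in>{1..n}. \<forall>i'\<in>{1..n}. \<forall>j<d. pre_equiv R (i, j) (i', j) \<longrightarrow> Y i = Y i') \<and>
     (\<forall>i\<in>{1..n}. \<forall>j<d. \<forall>j'<d. j > j' \<longrightarrow> pre_strict R (i, j) (i, j')) \<and>
     (\<forall>i\<in>{1..n}. \<forall>i'\<in>{1..n}. \<forall>j<d. \<forall>j'<d. pre_equiv R (i, j) (i', j') \<longrightarrow> j = j') \<and>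
     (\<forall>i\<in>{1..n}. \<forall>i'\<in>{1..n}. \<forall>j<d. j > 0 \<longrightarrow>
        \<not> pre_equiv R (i, j) (i', j) \<longrightarrow> \<not> pre_equiv R (i, j - 1) (i', j - 1))"

definition satisfies_CR :: "nat \<Rightarrow> nat \<Rightarrow> (nat \<Rightarrow> nat) \<Rightarrow> ((nat \<times> nat) \<times> (nat \<times> nat)) set
    \<Rightarrow> (nat \<times> nat list) set \<Rightarrow> bool" where
  "satisfies_CR d n Y R e \<longleftrightarrow> (\<exists>p. bij_betw p {1..n} e \<and>
     (\<forall>i\<in>{1..n}. fst (p i) = Y i) \<and>
     (\<forall>i\<in>{1..n}. \<forall>j<d. \<forall>i'\<in>{1..n}. \<forall>j'<d.
        ((i, j), (i', j')) \<in> R \<longleftrightarrow> snd (p i) ! j \<le> snd (p i') ! j'))"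

end

theory Submission
  imports Defs "HOL-Library.Nat_Bijection" "HOL-Library.Infinite_Set"
begin

definition phi :: "(nat \<Rightarrow> nat) \<Rightarrow> nat \<times> nat list \<Rightarrow> nat \<times> nat list" where
  "phi g x = (fst x, map (\<lambda>j. g (list_encode (drop j (snd x)))) [0..<length (snd x)])"

lemma triangle_smono: "strict_mono triangle"
  by (simp add: strict_mono_Suc_iff)

lemma triangle_ge: "n \<le> triangle n"
  by (induction n) auto

lemma enc_mono: "(c::nat) < c' \<Longrightarrow> list_encode (c # l) < list_encode (c' # l)"
proof -
  assume "c < c'"
  then have "triangle (c + list_encode l) < triangle (c' + list_encode l)"
    using strict_mono_less[OF triangle_smono, of "c + list_encode l" "c' + list_encode l"] by simp
  then show ?thesis using \<open>c < c'\<close> by (simp add: prod_encode_def)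
qed

lemma enc_mono_iff: "list_encode (c # l) < list_encode (c' # l) \<longleftrightarrow> c < c'"
  by (metis enc_mono linorder_neqE_nat not_less_iff_gr_or_eq)

lemma enc_suffix: "list_encode l < list_encode (c # l)"
  using triangle_ge[of "c + list_encode l"] by (simp add: prod_encode_def)

lemma enc_drop: "j < j' \<Longrightarrow> j' \<le> length as \<Longrightarrow> list_encode (drop j' as) < list_encode (drop j as)"
proof (induction "j' - j" arbitrary: j)
  case 0 then show ?case by simp
next
  case (Suc m)
  have jl: "j < length as" using Suc by simp
  have dj: "drop j as = as ! j # drop (Suc j) as" using jl by (simp add: Cons_nth_drop_Suc)
  show ?case
  proof (cases "Suc j = j'")
    case True then show ?thesis using dj enc_suffix by metis
  next
    case False
    then have "list_encode (drop j' as) < list_encode (drop (Suc j) as)"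
      using Suc by simp
    then show ?thesis using dj enc_suffix[of "drop (Suc j) as" "as ! j"] by simp
  qed
qed

lemma enc_eq: "list_encode a = list_encode b \<longleftrightarrow> a = b"
  using inj_list_encode[of UNIV] by (auto dest: injD)

lemma sorted_enum:
  fixes \<kappa> :: "'a \<Rightarrow> nat"
  assumes "finite e" "inj_on \<kappa> e"
  shows "\<exists>p. bij_betw p {1..card e} e \<and>
    (\<forall>i\<in>{1..card e}. \<forall>i'\<in>{1..card e}. i < i' \<longrightarrow> \<kappa> (p i) < \<kappa> (p i'))"
proof -
  define L where "L = sorted_list_of_set (\<kappa> ` e)"
  have fin: "finite (\<kappa> ` e)" using assms by simp
  have Ls: "sorted_wrt (<) L" unfolding L_def
    using fin by (simp add: strict_sorted_iff)
  have Ld: "distinct L" "set L = \<kappa> ` e" using fin by (auto simp: L_def)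
  have Llen: "length L = card e" using fin assms
    by (simp add: L_def card_image)
  have b1: "bij_betw (\<lambda>i. i - 1) {1..card e} {..<card e}"
    by (rule bij_betw_byWitness[where f'="\<lambda>i. i + 1"]) auto
  have b2: "bij_betw ((!) L) {..<card e} (\<kappa> ` e)"
    using bij_betw_nth[OF Ld(1)] Llen Ld(2) by simp
  have b3: "bij_betw (the_inv_into e \<kappa>) (\<kappa> ` e) e"
    using assms(2) by (simp add: bij_betw_the_inv_into inj_on_imp_bij_betw)
  define p where "p = the_inv_into e \<kappa> \<circ> ((!) L) \<circ> (\<lambda>i. i - 1)"
  have bp: "bij_betw p {1..card e} e" unfolding p_def
    using bij_betw_trans[OF bij_betw_trans[OF b1 b2] b3] by (simp add: comp_assoc)
  have "\<kappa> (p i) = L ! (i - 1)" if "i \<in> {1..card e}" for i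
  proof -
    have "L ! (i - 1) \<in> \<kappa> ` e" using that Llen Ld(2) by (metis atLeastAtMost_iff diff_less less_le_trans less_numeral_extra(1) nth_mem)
    then show ?thesis unfolding p_def using assms(2) by (simp add: f_the_inv_into_f)
  qed
  moreover have "L ! (i - 1) < L ! (i' - 1)" if "i \<in> {1..card e}" "i' \<in> {1..card e}" "i < i'" for i i'
    using sorted_wrt_nth_less[OF Ls, of "i - 1" "i' - 1"] that Llen by auto
  ultimately show ?thesis using bp by metis
qed

lemma drop_eq_iff:
  assumes "length as = length bs"
  shows "drop j as = drop j bs \<longleftrightarrow> (\<forall>j'. j \<le> j' \<and> j' < length as \<longrightarrow> as ! j' = bs ! j')"
proof
  assume h: "drop j as = drop j bs"
  show "\<forall>j'. j \<le> j' \<and> j' < length as \<longrightarrow> as ! j' = bs ! j'"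
  proof (intro allI impI)
    fix j' assume j': "j \<le> j' \<and> j' < length as"
    have "drop j as ! (j' - j) = as ! j'" using j' by simp
    moreover have "drop j bs ! (j' - j) = bs ! j'" using j' assms by simp
    ultimately show "as ! j' = bs ! j'" using h by simp
  qed
next
  assume h: "\<forall>j'. j \<le> j' \<and> j' < length as \<longrightarrow> as ! j' = bs ! j'"
  show "drop j as = drop j bs"
  proof (rule nth_equalityI)
    show "length (drop j as) = length (drop j bs)" using assms by simp
    fix i assume "i < length (drop j as)"
    then show "drop j as ! i = drop j bs ! i" using h assms by simp
  qed
qed

lemma phi_nth: "j < length (snd x) \<Longrightarrow> snd (phi g x) ! j = g (list_encode (drop j (snd x)))"
  by (simp add: phi_def)

lemma phi_len: "length (snd (phi g x)) = length (snd x)"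
  by (simp add: phi_def)

lemma phi_fst: "fst (phi g x) = fst x"
  by (simp add: phi_def)

lemma phi_in: "x \<in> ord_set d 1 \<Longrightarrow> phi g x \<in> ord_set d 1"
  by (auto simp: ord_set_def phi_def)

lemma phi_L1:
  assumes "strict_mono g" "x \<in> ord_set d 1" "y \<in> ord_set d 1" "j < d" "j' < d"
    "snd (phi g x) ! j = snd (phi g y) ! j'"
  shows "j = j'"
proof -
  have "g (list_encode (drop j (snd x))) = g (list_encode (drop j' (snd y)))"
    using assms by (auto simp: ord_set_def phi_nth)
  then have "drop j (snd x) = drop j' (snd y)"
    using assms(1) by (simp add: strict_mono_eq enc_eq)
  then have "length (drop j (snd x)) = length (drop j' (snd y))" by simp
  then show ?thesis using assms by (auto simp: ord_set_def)
qed

lemma phi_L2: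
  assumes "strict_mono g" "x \<in> ord_set d 1" "y \<in> ord_set d 1" "0 < j" "j < d"
    "snd (phi g x) ! (j - 1) = snd (phi g y) ! (j - 1)"
  shows "snd (phi g x) ! j = snd (phi g y) ! j"
proof -
  have "g (list_encode (drop (j - 1) (snd x))) = g (list_encode (drop (j - 1) (snd y)))"
    using assms by (auto simp: ord_set_def phi_nth)
  then have "drop (j - 1) (snd x) = drop (j - 1) (snd y)"
    using assms(1) by (simp add: strict_mono_eq enc_eq)
  then have "drop 1 (drop (j - 1) (snd x)) = drop 1 (drop (j - 1) (snd y))" by simp
  then have "drop j (snd x) = drop j (snd y)" using assms(4) by simp
  then show ?thesis using assms by (auto simp: ord_set_def phi_nth)
qed

lemma phi_L3:
  assumes "strict_mono g" "x \<in> ord_set d 1" "j' < j" "j < d"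
  shows "snd (phi g x) ! j < snd (phi g x) ! j'"
proof -
  have "list_encode (drop j (snd x)) < list_encode (drop j' (snd x))"
    using enc_drop[of j' j "snd x"] assms by (auto simp: ord_set_def)
  then show ?thesis using assms by (auto simp: ord_set_def phi_nth strict_mono_less)
qed

lemma phi_inj:
  assumes "strict_mono g"
  shows "inj_on (phi g) (ord_set d 1)"
proof
  fix x y assume x: "x \<in> ord_set d 1" and y: "y \<in> ord_set d 1" and e: "phi g x = phi g y"
  show "x = y"
  proof (cases "d = 0")
    case True then show ?thesis using x y by (auto simp: ord_set_def)
  next
    case False
    then have "snd (phi g x) ! 0 = snd (phi g y) ! 0" using e by simp
    then have "g (list_encode (snd x)) = g (list_encode (snd y))"
      using x y False by (auto simp: ord_set_def phi_nth)
    then have "snd x = snd y" using assms by (simp add: strict_mono_eq enc_eq)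
    moreover have "fst x = fst y" using x y by (simp add: ord_set_def mem_Times_iff)
    ultimately show ?thesis by (simp add: prod_eq_iff)
  qed
qed

lemma phi_order:
  assumes "strict_mono g" "x \<in> ord_set d 1" "y \<in> ord_set d 1"
  shows "ord_less x y \<longleftrightarrow> ord_less (phi g x) (phi g y)"
proof -
  obtain as where xa: "x = (0, as)" "length as = d" using assms(2) by (auto simp: ord_set_def)
  obtain bs where yb: "y = (0, bs)" "length bs = d" using assms(3) by (auto simp: ord_set_def)
  have A: "snd (phi g x) ! j = g (list_encode (drop j as))" if "j < d" for j
    using that xa by (simp add: phi_nth)
  have B: "snd (phi g y) ! j = g (list_encode (drop j bs))" if "j < d" for j
    using that yb by (simp add: phi_nth)
  have eqj: "g (list_encode (drop j as)) = g (list_encode (drop j bs)) \<longleftrightarrow> drop j as = drop j bs" for j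
    using assms(1) by (simp add: strict_mono_eq enc_eq)
  have tail: "(\<forall>j'. j < j' \<and> j' < d \<longrightarrow> as ! j' = bs ! j') \<longleftrightarrow>
     (\<forall>j'. j < j' \<and> j' < d \<longrightarrow> drop j' as = drop j' bs)" for j
  proof
    assume "\<forall>j'. j < j' \<and> j' < d \<longrightarrow> as ! j' = bs ! j'"
    then show "\<forall>j'. j < j' \<and> j' < d \<longrightarrow> drop j' as = drop j' bs"
      using drop_eq_iff[of as bs] xa yb by auto
  next
    assume "\<forall>j'. j < j' \<and> j' < d \<longrightarrow> drop j' as = drop j' bs"
    then show "\<forall>j'. j < j' \<and> j' < d \<longrightarrow> as ! j' = bs ! j'"
      using drop_eq_iff[of as bs] xa yb by auto
  qed
  have key: "g (list_encode (drop j as)) < g (list_encode (drop j bs)) \<longleftrightarrow> as ! j < bs ! j"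
    if "j < d" "\<forall>j'. j < j' \<and> j' < d \<longrightarrow> as ! j' = bs ! j'" for j
  proof -
    have "drop (Suc j) as = drop (Suc j) bs"
      using drop_eq_iff[of as bs "Suc j"] that xa yb by auto
    moreover have "drop j as = as ! j # drop (Suc j) as" "drop j bs = bs ! j # drop (Suc j) bs"
      using that xa yb by (auto simp: Cons_nth_drop_Suc)
    ultimately show ?thesis using assms(1) enc_mono_iff by (simp add: strict_mono_less)
  qed
  have "ord_less x y \<longleftrightarrow> (\<exists>j<d. as ! j < bs ! j \<and> (\<forall>j'. j < j' \<and> j' < d \<longrightarrow> as ! j' = bs ! j'))"
    using xa yb by (simp add: ord_less_def)
  also have "\<dots> \<longleftrightarrow> (\<exists>j<d. snd (phi g x) ! j < snd (phi g y) ! j \<and>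
        (\<forall>j'. j < j' \<and> j' < d \<longrightarrow> snd (phi g x) ! j' = snd (phi g y) ! j'))"
  proof
    assume "\<exists>j<d. as ! j < bs ! j \<and> (\<forall>j'. j < j' \<and> j' < d \<longrightarrow> as ! j' = bs ! j')"
    then obtain j where j: "j < d" "as ! j < bs ! j" "\<forall>j'. j < j' \<and> j' < d \<longrightarrow> as ! j' = bs ! j'"
      by blast
    have "snd (phi g x) ! j < snd (phi g y) ! j" using key[OF j(1,3)] j A B by simp
    moreover have "\<forall>j'. j < j' \<and> j' < d \<longrightarrow> snd (phi g x) ! j' = snd (phi g y) ! j'"
    proof (intro allI impI)
      fix j' assume h: "j < j' \<and> j' < d"
      then have "drop j' as = drop j' bs" using tail[of j] j(3) by blast
      then show "snd (phi g x) ! j' = snd (phi g y) ! j'" using A B h by simp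
    qed
    ultimately show "\<exists>j<d. snd (phi g x) ! j < snd (phi g y) ! j \<and>
        (\<forall>j'. j < j' \<and> j' < d \<longrightarrow> snd (phi g x) ! j' = snd (phi g y) ! j')" using j(1) by blast
  next
    assume "\<exists>j<d. snd (phi g x) ! j < snd (phi g y) ! j \<and>
        (\<forall>j'. j < j' \<and> j' < d \<longrightarrow> snd (phi g x) ! j' = snd (phi g y) ! j')"
    then obtain j where j: "j < d" "snd (phi g x) ! j < snd (phi g y) ! j"
      "\<forall>j'. j < j' \<and> j' < d \<longrightarrow> snd (phi g x) ! j' = snd (phi g y) ! j'" by blast
    have t: "\<forall>j'. j < j' \<and> j' < d \<longrightarrow> drop j' as = drop j' bs"
    proof (intro allI impI)
      fix j' assume h: "j < j' \<and> j' < d"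
      then have "g (list_encode (drop j' as)) = g (list_encode (drop j' bs))"
        using A B j(3) by metis
      then show "drop j' as = drop j' bs" using eqj by blast
    qed
    then have t2: "\<forall>j'. j < j' \<and> j' < d \<longrightarrow> as ! j' = bs ! j'" using tail[of j] by blast
    have "as ! j < bs ! j" using key[OF j(1) t2] j A B by simp
    then show "\<exists>j<d. as ! j < bs ! j \<and> (\<forall>j'. j < j' \<and> j' < d \<longrightarrow> as ! j' = bs ! j')"
      using j(1) t2 by blast
  qed
  also have "\<dots> \<longleftrightarrow> ord_less (phi g x) (phi g y)"
    unfolding ord_less_def using xa yb by (simp add: phi_len phi_fst)
  finally show ?thesis .
qed

theorem lemma8p2:
  fixes n d :: nat and G :: "nat set"
  assumes "infinite G"
  shows "\<exists>H \<subseteq> ord_set d 1. order_equiv H (ord_set d 1) \<and>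
    (\<forall>e. e \<subseteq> H \<and> finite e \<and> card e = n \<longrightarrow>
       (\<exists>Y R. coloring_rule d 1 n Y R \<and> satisfies_CR d n Y R e) \<and>
       (\<forall>x\<in>e. \<forall>j<d. snd x ! j \<in> G))"
proof -
  define g where "g = enumerate G"
  have sm: "strict_mono g" using assms by (simp add: g_def strict_mono_enumerate)
  have gG: "g k \<in> G" for k using assms by (simp add: g_def enumerate_in_set)
  define OS where "OS = ord_set d 1"
  define H where "H = phi g ` OS"
  have injp: "inj_on (phi g) OS" using phi_inj[OF sm] by (simp add: OS_def)
  have HO: "H \<subseteq> OS" using phi_in unfolding H_def OS_def by blast
  have oe: "order_equiv H OS"
  proof -
    define f where "f = the_inv_into OS (phi g)"
    have bf: "bij_betw f H OS" unfolding f_def H_def using injp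
      by (simp add: bij_betw_the_inv_into inj_on_imp_bij_betw)
    have "ord_less u v \<longleftrightarrow> ord_less (f u) (f v)" if uv: "u \<in> H" "v \<in> H" for u v
    proof -
      obtain x where x: "x \<in> OS" "u = phi g x" using uv(1) H_def by blast
      obtain y where y: "y \<in> OS" "v = phi g y" using uv(2) H_def by blast
      have "f u = x" "f v = y" using x y injp by (simp_all add: f_def the_inv_into_f_f)
      then show ?thesis using phi_order[OF sm, of x d y] x y by (simp add: OS_def)
    qed
    then show ?thesis using bf unfolding order_equiv_def by blast
  qed
  have main: "(\<exists>Y R. coloring_rule d 1 n Y R \<and> satisfies_CR d n Y R e) \<and>
       (\<forall>x\<in>e. \<forall>j<d. snd x ! j \<in> G)" if e: "e \<subseteq> H" "finite e" "card e = n" for e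
  proof -
    have coef: "\<forall>x\<in>e. \<forall>j<d. snd x ! j \<in> G"
    proof (intro ballI allI impI)
      fix u j assume "u \<in> e" "j < d"
      then obtain x where "x \<in> OS" "u = phi g x" using e H_def by blast
      then show "snd u ! j \<in> G" using \<open>j < d\<close> gG by (simp add: phi_nth OS_def ord_set_def mem_Times_iff)
    qed
    define \<kappa> where "\<kappa> = (\<lambda>u::nat \<times> nat list. snd u ! 0)"
    have d0: "card e \<le> 1" if "d = 0"
    proof -
      have "OS \<subseteq> {(0, [])}" using that by (auto simp: OS_def ord_set_def)
      then have "e \<subseteq> {(0, [])}" using e(1) HO by blast
      then show ?thesis using card_mono[of "{(0::nat, []::nat list)}" e] by simp
    qed
    have injk: "inj_on \<kappa> e"
    proof (cases "d = 0")
      case True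
      then show ?thesis using d0 e(2) by (metis card_le_Suc0_iff_eq inj_on_def One_nat_def)
    next
      case False
      show ?thesis
      proof
        fix u v assume u: "u \<in> e" and v: "v \<in> e" and k: "\<kappa> u = \<kappa> v"
        obtain x where x: "x \<in> OS" "u = phi g x" using u e H_def by blast
        obtain y where y: "y \<in> OS" "v = phi g y" using v e H_def by blast
        have "snd (phi g x) ! 0 = snd (phi g y) ! 0" using k x y by (simp add: \<kappa>_def)
        then have "g (list_encode (snd x)) = g (list_encode (snd y))"
          using x y False by (auto simp: OS_def ord_set_def phi_nth mem_Times_iff)
        then have "snd x = snd y" using sm by (simp add: strict_mono_eq enc_eq)
        moreover have "fst x = fst y" using x y by (simp add: OS_def ord_set_def mem_Times_iff)
        ultimately have "x = y" by (simp add: prod_eq_iff)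
        then show "u = v" using x y by simp
      qed
    qed
    obtain p where bp: "bij_betw p {1..n} e"
      and pm: "\<forall>i\<in>{1..n}. \<forall>i'\<in>{1..n}. i < i' \<longrightarrow> \<kappa> (p i) < \<kappa> (p i')"
      using sorted_enum[OF e(2) injk] e(3) by blast
    have "\<forall>i\<in>{1..n}. \<exists>x. x \<in> OS \<and> p i = phi g x"
      using bp e(1) H_def bij_betwE by blast
    then obtain X where X: "\<And>i. i \<in> {1..n} \<Longrightarrow> X i \<in> OS \<and> p i = phi g (X i)"
      by metis
    define V where "V = (\<lambda>i j. snd (p i) ! j)"
    have V1: "j = j'" if "i \<in> {1..n}" "i' \<in> {1..n}" "j < d" "j' < d" "V i j = V i' j'" for i i' j j'
      using phi_L1[OF sm, of "X i" d "X i'" j j'] X[OF that(1)] X[OF that(2)] that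
      by (simp add: V_def OS_def)
    have V2: "V i j = V i' j" if "i \<in> {1..n}" "i' \<in> {1..n}" "0 < j" "j < d" "V i (j - 1) = V i' (j - 1)" for i i' j
      using phi_L2[OF sm, of "X i" d "X i'" j] X[OF that(1)] X[OF that(2)] that
      by (simp add: V_def OS_def)
    have V3: "V i j < V i j'" if "i \<in> {1..n}" "j' < j" "j < d" for i j j'
      using phi_L3[OF sm, of "X i" d j' j] X[OF that(1)] that
      by (simp add: V_def OS_def)
    have V4: "V i 0 < V i' 0" if "i \<in> {1..n}" "i' \<in> {1..n}" "i < i'" for i i'
      using pm that by (simp add: V_def \<kappa>_def)
    have fst0: "fst (p i) = 0" if "i \<in> {1..n}" for i
      using X[OF that] phi_fst[of g "X i"] by (simp add: OS_def ord_set_def mem_Times_iff)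
    define R where "R = {((i, j), (i', j')). (i, j) \<in> index_set n d \<and> (i', j') \<in> index_set n d \<and> V i j \<le> V i' j'}"
    define Y where "Y = (\<lambda>i::nat. 0::nat)"
    have tp: "total_preorder_on (index_set n d) R"
      unfolding total_preorder_on_def
    proof (intro conjI)
      show "R \<subseteq> index_set n d \<times> index_set n d" by (auto simp: R_def)
      show "\<forall>x\<in>index_set n d. (x, x) \<in> R" by (auto simp: R_def)
      show "trans R" by (rule transI) (auto simp: R_def)
      show "\<forall>x\<in>index_set n d. \<forall>y\<in>index_set n d. (x, y) \<in> R \<or> (y, x) \<in> R" by (auto simp: R_def)
    qed
    have Rin: "((i, j), (i', j')) \<in> R \<longleftrightarrow> V i j \<le> V i' j'"
      if "i \<in> {1..n}" "i' \<in> {1..n}" "j < d" "j' < d" for i i' j j'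
      using that by (simp add: R_def index_set_def)
    have cr: "coloring_rule d 1 n Y R"
      unfolding coloring_rule_def
    proof (intro conjI)
      show "\<forall>i\<in>{1..n}. Y i < 1" by (simp add: Y_def)
      show "total_preorder_on (index_set n d) R" by (rule tp)
      show "1 \<le> d \<longrightarrow> (\<forall>i\<in>{1..n}. \<forall>i'\<in>{1..n}. i < i' \<longrightarrow> pre_strict R (i, 0) (i', 0))"
      proof (intro impI ballI)
        fix i i' assume "1 \<le> d" and i: "i \<in> {1..n}" "i' \<in> {1..n}" and "i < i'"
        then have "V i 0 < V i' 0" using V4 by blast
        then show "pre_strict R (i, 0) (i', 0)"
          using Rin[OF i, of 0 0] Rin[OF i(2) i(1), of 0 0] \<open>1 \<le> d\<close> by (simp add: pre_strict_def)
      qed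
      show "d = 0 \<longrightarrow> (\<forall>i\<in>{1..n}. \<forall>i'\<in>{1..n}. i < i' \<longrightarrow> Y i < Y i')"
        using d0 e(3) by auto
      show "\<forall>i\<in>{1..n}. \<forall>i'\<in>{1..n}. \<forall>j<d. pre_equiv R (i, j) (i', j) \<longrightarrow> Y i = Y i'"
        by (simp add: Y_def)
      show "\<forall>i\<in>{1..n}. \<forall>j<d. \<forall>j'<d. j' < j \<longrightarrow> pre_strict R (i, j) (i, j')"
      proof (intro impI ballI allI)
        fix i j j' assume i: "i \<in> {1..n}" and j: "j < d" "j' < d" "j' < j"
        then have "V i j < V i j'" using V3 by blast
        then show "pre_strict R (i, j) (i, j')"
          using Rin[OF i i j(1) j(2)] Rin[OF i i j(2) j(1)] by (simp add: pre_strict_def)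
      qed
      show "\<forall>i\<in>{1..n}. \<forall>i'\<in>{1..n}. \<forall>j<d. \<forall>j'<d. pre_equiv R (i, j) (i', j') \<longrightarrow> j = j'"
      proof (intro impI ballI allI)
        fix i i' j j' assume i: "i \<in> {1..n}" "i' \<in> {1..n}" and j: "j < d" "j' < d"
          and pe: "pre_equiv R (i, j) (i', j')"
        then have "V i j = V i' j'"
          using Rin[OF i j] Rin[OF i(2) i(1) j(2) j(1)] by (simp add: pre_equiv_def)
        then show "j = j'" using V1[OF i j] by blast
      qed
      show "\<forall>i\<in>{1..n}. \<forall>i'\<in>{1..n}. \<forall>j<d. 0 < j \<longrightarrow>
        \<not> pre_equiv R (i, j) (i', j) \<longrightarrow> \<not> pre_equiv R (i, j - 1) (i', j - 1)"
      proof (intro ballI allI impI)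
        fix i i' j assume i: "i \<in> {1..n}" "i' \<in> {1..n}" and j: "j < d" "0 < j"
          and ne: "\<not> pre_equiv R (i, j) (i', j)"
        show "\<not> pre_equiv R (i, j - 1) (i', j - 1)"
        proof
          assume "pre_equiv R (i, j - 1) (i', j - 1)"
          moreover have jd: "j - 1 < d" using j by simp
          ultimately have "V i (j - 1) = V i' (j - 1)" using Rin[OF i jd jd] Rin[OF i(2) i(1) jd jd]
            by (simp add: pre_equiv_def)
          then have "V i j = V i' j" using V2[OF i j(2) j(1)] by simp
          then show False using ne Rin[OF i j(1) j(1)] Rin[OF i(2) i(1) j(1) j(1)]
            by (simp add: pre_equiv_def)
        qed
      qed
    qed
    have sat: "satisfies_CR d n Y R e"
      unfolding satisfies_CR_def
      using bp fst0 Rin by (auto simp: Y_def V_def)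
    show ?thesis using cr sat coef by blast
  qed
  show ?thesis using HO oe main unfolding OS_def by blast
qed

end
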